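(* Let $\delta\in(0,1)$ and $\iota=\log(2|\mathcal{G}||\mathcal{T}||\Pi|/\delta)$. On the event $\mathcal{E}$ (defined in the context), for every policy $\pi\in\Pi$, $$\max_{T\in\mathcal{T}}\mathrm{lb}(T,\pi)\ge\eta(T^\star,\pi)-\frac{6V_{\max}\epsilon_\rho(\pi)}{(1-\gamma)^2}-\frac{1}{1-\gamma}\Big(V_{\max}\epsilon_\mu(\pi)+2V_{\max}\sqrt{\zeta\iota/n}+\zeta V_{\max}\mathrm{TV}(\hat\mu,\mu)\Big).$$
   Context: Setting: a discounted MDP with state space $\mathcal{S}$ and action space $\mathcal{A}$ (discrete), unknown true transition $T^\star:\mathcal{S}\times\mathcal{A}\to\Delta(\mathcal{S})$, known reward $r:\mathcal{S}\times\mathcal{A}\to\mathbb{R}_{\ge0}$, discount $\gamma\in[0,1)$. For a transition $T$ and policy $\pi:\mathcal{S}\to\Delta(\mathcal{A})$, $V^\pi_T(s)=\mathbb{E}[\sum_{t\ge0}\gamma^t r(s_t,a_t)\mid s_0=s,a_t\sim\pi(s_t),s_{t+1}\sim T(s_t,a_t)]$; $R_{\max}=\max r$, $V_{\max}=R_{\max}/(1-\gamma)$; fixed initial state $s_0$, $\eta(T,\pi)=V^\pi_T(s_0)$; $\rho^\pi_T(s,a)=(1-\gamma)\sum_{t\ge0}\gamma^t\Pr^\pi_T(s_t=s,a_t=a\mid s_0)$. Data $\mathcal{D}=\{(s_i,a_i,s_i')\}_{i=1}^n$ i.i.d. from $\mu$ on $\mathcal{S}\times\mathcal{A}\times\mathcal{S}$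 with $s'\mid(s,a)\sim T^\star(s,a)$; $\mu(s,a)$ also denotes its $(s,a)$-marginal. $\hat\mu$ is a given distribution on $\mathcal{S}\times\mathcal{A}$; $\mathrm{TV}(p,q)=\sum_x|p(x)-q(x)|$. Finite classes: $\mathcal{G}$ of functions $g:\mathcal{S}\to[0,V_{\max}]$, $\mathcal{T}$ of transitions (possibly $T^\star\notin\mathcal{T}$), $\Pi$ of policies. Cutoff $\zeta>0$. $w_{\pi,T}(s,a)=\mathbf{1}\{\rho^\pi_T(s,a)/\hat\mu(s,a)\le\zeta\}\rho^\pi_T(s,a)/\hat\mu(s,a)$ (ratio $+\infty$ if $\hat\mu(s,a)=0<\rho^\pi_T(s,a)$). $f^g_T(s,a)=\mathbb{E}_{s'\sim T(s,a)}g(s')$. $\ell_w(g,T)=\big|\frac1n\sum_i w(s_i,a_i)(f^g_T(s_i,a_i)-g(s_i'))\big|$. $\mathrm{lb}(T,\pi)=\eta(T,\pi)-\frac1{1-\gamma}\Big(\sup_{g\in\mathcal{G}}\ell_{w_{\pi,T}}(g,T)+V_{\max}\mathbb{E}_{(s,a)\sim\rho^\pi_T}[\mathbf{1}\{\rho^\pi_T(s,a)/\hat\mu(s,a)>\zeta\}]\Big)$. $\epsilon_\rho(\pi)=\inf_{T\in\mathcal{T}}\mathbb{E}_{(s,a)\sim\rho^\pi_{T^\star}}[\mathrm{TV}(T(s,a),T^\star(s,a))]$; $\epsilon_\mu(\pi)=\mathbb{E}_{(s,a)\sim\rho^\pi_{T^\star}}[\mathbf{1}\{\rho^\pi_{T^\star}(s,a)/\hat\mu(s,a)>\zeta/2\}]$.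 Event $\mathcal{E}$: for all $\pi\in\Pi,g\in\mathcal{G},T\in\mathcal{T}$, $|L(\pi,g,T)-l(\pi,g,T)|\le2V_{\max}\sqrt{\zeta\iota/n}$, where $L(\pi,g,T)=\mathbb{E}_{(s,a)\sim\mu}[w_{\pi,T}(s,a)(f^g_T(s,a)-f^g_{T^\star}(s,a))]$ and $l(\pi,g,T)=\frac1n\sum_i w_{\pi,T}(s_i,a_i)(f^g_T(s_i,a_i)-g(s_i'))$. *)

theory Defs
  imports "HOL-Probability.Probability"
begin

primrec sa_dist :: "('s \<Rightarrow> 'a \<Rightarrow> 's pmf) \<Rightarrow> ('s \<Rightarrow> 'a pmf) \<Rightarrow> 's \<Rightarrow> nat \<Rightarrow> ('s \<times> 'a) pmf" where
  "sa_dist T pol s0 0 = map_pmf (\<lambda>a. (s0, a)) (pol s0)"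
| "sa_dist T pol s0 (Suc t) =
     bind_pmf (sa_dist T pol s0 t)
       (\<lambda>(s, a). bind_pmf (T s a) (\<lambda>s'. map_pmf (\<lambda>a'. (s', a')) (pol s')))"

definition eta :: "real \<Rightarrow> ('s \<times> 'a \<Rightarrow> real) \<Rightarrow> 's \<Rightarrow> ('s \<Rightarrow> 'a \<Rightarrow> 's pmf) \<Rightarrow> ('s \<Rightarrow> 'a pmf) \<Rightarrow> real" where
  "eta \<gamma> r s0 T pol = (\<Sum>t. \<gamma> ^ t * measure_pmf.expectation (sa_dist T pol s0 t) r)"

definition occ :: "real \<Rightarrow> 's \<Rightarrow> ('s \<Rightarrow> 'a \<Rightarrow> 's pmf) \<Rightarrow> ('s \<Rightarrow> 'a pmf) \<Rightarrow> 's \<times> 'a \<Rightarrow> real" where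
  "occ \<gamma> s0 T pol x = (1 - \<gamma>) * (\<Sum>t. \<gamma> ^ t * pmf (sa_dist T pol s0 t) x)"

definition Eocc :: "real \<Rightarrow> 's \<Rightarrow> ('s \<Rightarrow> 'a \<Rightarrow> 's pmf) \<Rightarrow> ('s \<Rightarrow> 'a pmf) \<Rightarrow> ('s \<times> 'a \<Rightarrow> real) \<Rightarrow> real" where
  "Eocc \<gamma> s0 T pol f = (\<Sum>\<^sub>\<infinity>x. occ \<gamma> s0 T pol x * f x)"

text \<open>TV(p,q) = sum_x |p(x) - q(x)| (no factor 1/2, as in the paper).\<close>
definition TV :: "'x pmf \<Rightarrow> 'x pmf \<Rightarrow> real" where
  "TV p q = (\<Sum>\<^sub>\<infinity>x. \<bar>pmf p x - pmf q x\<bar>)"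

text \<open>The ratio rho(x)/muhat(x) exceeds c, with the convention that the ratio is +infinity
  when muhat(x) = 0 < rho(x) (and 0 when both vanish).\<close>
definition ratio_gt :: "('x \<Rightarrow> real) \<Rightarrow> 'x pmf \<Rightarrow> real \<Rightarrow> 'x \<Rightarrow> bool" where
  "ratio_gt \<rho> muh c x = (if pmf muh x = 0 then \<rho> x > 0 else \<rho> x / pmf muh x > c)"

definition wgt :: "real \<Rightarrow> ('x \<Rightarrow> real) \<Rightarrow> 'x pmf \<Rightarrow> 'x \<Rightarrow> real" where
  "wgt \<zeta> \<rho> muh x = (if ratio_gt \<rho> muh \<zeta> x then 0 else \<rho> x / pmf muh x)"

definition fT :: "('s \<Rightarrow> 'a \<Rightarrow> 's pmf) \<Rightarrow> ('s \<Rightarrow> real) \<Rightarrow> 's \<times> 'a \<Rightarrow> real" where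
  "fT T g x = measure_pmf.expectation (T (fst x) (snd x)) g"

definition lemp :: "('s \<times> 'a \<times> 's) list \<Rightarrow> ('s \<times> 'a \<Rightarrow> real) \<Rightarrow> ('s \<Rightarrow> real) \<Rightarrow> ('s \<Rightarrow> 'a \<Rightarrow> 's pmf) \<Rightarrow> real" where
  "lemp D w g T = (\<Sum>(s, a, s')\<leftarrow>D. w (s, a) * (fT T g (s, a) - g s')) / real (length D)"

definition Rmax :: "('s \<times> 'a \<Rightarrow> real) \<Rightarrow> real" where
  "Rmax r = (SUP x. r x)"

definition Vmax :: "real \<Rightarrow> ('s \<times> 'a \<Rightarrow> real) \<Rightarrow> real" where
  "Vmax \<gamma> r = Rmax r / (1 - \<gamma>)"

definition lb :: "real \<Rightarrow> ('s \<times> 'a \<Rightarrow> real) \<Rightarrow> 's \<Rightarrow> real \<Rightarrow> ('s \<times> 'a) pmf \<Rightarrow>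
    ('s \<times> 'a \<times> 's) list \<Rightarrow> ('s \<Rightarrow> real) set \<Rightarrow> ('s \<Rightarrow> 'a \<Rightarrow> 's pmf) \<Rightarrow> ('s \<Rightarrow> 'a pmf) \<Rightarrow> real" where
  "lb \<gamma> r s0 \<zeta> muh D G T pol =
     eta \<gamma> r s0 T pol
     - 1 / (1 - \<gamma>) *
       (Max ((\<lambda>g. \<bar>lemp D (wgt \<zeta> (occ \<gamma> s0 T pol) muh) g T\<bar>) ` G)
        + Vmax \<gamma> r * Eocc \<gamma> s0 T pol
            (\<lambda>x. if ratio_gt (occ \<gamma> s0 T pol) muh \<zeta> x then 1 else 0))"

definition eps_rho :: "real \<Rightarrow> 's \<Rightarrow> ('s \<Rightarrow> 'a \<Rightarrow> 's pmf) set \<Rightarrow> ('s \<Rightarrow> 'a \<Rightarrow> 's pmf) \<Rightarrow> ('s \<Rightarrow> 'a pmf) \<Rightarrow> real" where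
  "eps_rho \<gamma> s0 TT Tstar pol =
     (INF T\<in>TT. Eocc \<gamma> s0 Tstar pol (\<lambda>(s, a). TV (T s a) (Tstar s a)))"

definition eps_mu :: "real \<Rightarrow> 's \<Rightarrow> real \<Rightarrow> ('s \<times> 'a) pmf \<Rightarrow> ('s \<Rightarrow> 'a \<Rightarrow> 's pmf) \<Rightarrow> ('s \<Rightarrow> 'a pmf) \<Rightarrow> real" where
  "eps_mu \<gamma> s0 \<zeta> muh Tstar pol =
     Eocc \<gamma> s0 Tstar pol (\<lambda>x. if ratio_gt (occ \<gamma> s0 Tstar pol) muh (\<zeta> / 2) x then 1 else 0)"

definition sa_marg :: "('s \<times> 'a \<times> 's) pmf \<Rightarrow> ('s \<times> 'a) pmf" where
  "sa_marg mu = map_pmf (\<lambda>(s, a, s'). (s, a)) mu"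

definition Lpop :: "real \<Rightarrow> 's \<Rightarrow> real \<Rightarrow> ('s \<times> 'a) pmf \<Rightarrow> ('s \<times> 'a \<times> 's) pmf \<Rightarrow>
    ('s \<Rightarrow> 'a \<Rightarrow> 's pmf) \<Rightarrow> ('s \<Rightarrow> 'a pmf) \<Rightarrow> ('s \<Rightarrow> real) \<Rightarrow> ('s \<Rightarrow> 'a \<Rightarrow> 's pmf) \<Rightarrow> real" where
  "Lpop \<gamma> s0 \<zeta> muh mu Tstar pol g T =
     measure_pmf.expectation (sa_marg mu)
       (\<lambda>x. wgt \<zeta> (occ \<gamma> s0 T pol) muh x * (fT T g x - fT Tstar g x))"

definition lsamp :: "real \<Rightarrow> 's \<Rightarrow> real \<Rightarrow> ('s \<times> 'a) pmf \<Rightarrow> ('s \<times> 'a \<times> 's) list \<Rightarrow>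
    ('s \<Rightarrow> 'a pmf) \<Rightarrow> ('s \<Rightarrow> real) \<Rightarrow> ('s \<Rightarrow> 'a \<Rightarrow> 's pmf) \<Rightarrow> real" where
  "lsamp \<gamma> s0 \<zeta> muh D pol g T = lemp D (wgt \<zeta> (occ \<gamma> s0 T pol) muh) g T"

end

theory Submission
  imports Defs
begin

lemma pmf_expect_infsum:
  fixes p :: "'x::countable pmf" and h :: "'x \<Rightarrow> real"
  assumes hb: "\<And>x. \<bar>h x\<bar> \<le> B"
  shows "(\<lambda>x. pmf p x * h x) summable_on UNIV"
    and "measure_pmf.expectation p h = (\<Sum>\<^sub>\<infinity>x. pmf p x * h x)"
proof -
  have as: "Infinite_Set_Sum.abs_summable_on (\<lambda>x. pmf p x * h x) UNIV"
  proof (rule abs_summable_on_comparison_test)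
    show "Infinite_Set_Sum.abs_summable_on (\<lambda>x. pmf p x * B) UNIV"
      using pmf_abs_summable[of p UNIV] by (intro abs_summable_on_cmult_left)
    fix x
    have B0: "0 \<le> B" using hb[of x] by linarith
    have "\<bar>h x\<bar> \<le> \<bar>B\<bar>" using hb[of x] B0 by simp
    then show "norm (pmf p x * h x) \<le> norm (pmf p x * B)"
      unfolding real_norm_def abs_mult by (rule mult_left_mono) simp
  qed
  then show "(\<lambda>x. pmf p x * h x) summable_on UNIV"
    using abs_summable_equivalent abs_summable_summable by blast
  have "measure_pmf.expectation p h = integral\<^sup>L (count_space UNIV) (\<lambda>x. pmf p x * h x)"
    unfolding measure_pmf_eq_density by (subst integral_density) auto
  also have "\<dots> = infsetsum (\<lambda>x. pmf p x * h x) UNIV"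
    by (simp add: infsetsum_def)
  also have "\<dots> = (\<Sum>\<^sub>\<infinity>x. pmf p x * h x)"
    using as by (rule infsetsum_infsum)
  finally show "measure_pmf.expectation p h = (\<Sum>\<^sub>\<infinity>x. pmf p x * h x)" .
qed

lemma summable_on_diff:
  fixes f g :: "'a \<Rightarrow> real"
  assumes "f summable_on A" "g summable_on A"
  shows "(\<lambda>x. f x - g x) summable_on A"
proof -
  have "(\<lambda>x. f x + - g x) summable_on A"
    using assms by (intro summable_on_add) (auto simp: summable_on_uminus)
  then show ?thesis by simp
qed

lemma infsum_diff:
  fixes f g :: "'a \<Rightarrow> real"
  assumes "f summable_on A" "g summable_on A"
  shows "(\<Sum>\<^sub>\<infinity>x\<in>A. f x - g x) = infsum f A - infsum g A"
proof -
  have "(\<Sum>\<^sub>\<infinity>x\<in>A. f x + - g x) = infsum f A + infsum (\<lambda>x. - g x) A"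
    using assms by (intro infsum_add) (auto simp: summable_on_uminus)
  then show ?thesis by (simp add: infsum_uminus)
qed

lemma int_bdd:
  fixes h :: "'x \<Rightarrow> real"
  assumes "\<And>x. \<bar>h x\<bar> \<le> B"
  shows "integrable (measure_pmf p) h"
  by (rule measure_pmf.integrable_const_bound[where B=B]) (use assms in auto)

lemma integral_bind_pmf_bdd:
  fixes f :: "'b \<Rightarrow> real"
  assumes "\<And>x. \<bar>f x\<bar> \<le> B"
  shows "measure_pmf.expectation (bind_pmf p N) f = measure_pmf.expectation p (\<lambda>x. measure_pmf.expectation (N x) f)"
  unfolding measure_pmf_bind
  apply (rule integral_bind[where K="count_space UNIV" and B=B and B'=1])
  using assms by (auto simp: measure_pmf_in_subprob_algebra)

lemma E_abs_le:
  fixes h :: "'x \<Rightarrow> real"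
  assumes "\<And>x. \<bar>h x\<bar> \<le> B"
  shows "\<bar>measure_pmf.expectation p h\<bar> \<le> B"
proof -
  have "\<bar>measure_pmf.expectation p h\<bar> \<le> measure_pmf.expectation p (\<lambda>x. \<bar>h x\<bar>)"
    by (rule integral_abs_bound)
  also have "\<dots> \<le> measure_pmf.expectation p (\<lambda>x. B)"
    by (rule integral_mono) (use assms int_bdd[OF assms] in \<open>auto intro: int_bdd[where B=B]\<close>)
  finally show ?thesis by simp
qed

definition sgnd :: "'x pmf \<Rightarrow> 'x pmf \<Rightarrow> 'x \<Rightarrow> real" where
  "sgnd p q x = sgn (pmf p x - pmf q x)"

lemma sgnd_bdd: "\<bar>sgnd p q x\<bar> \<le> 1"
  by (simp add: sgnd_def sgn_real_def)

lemma TV_eq_diff: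
  fixes p q :: "'x::countable pmf"
  shows "TV p q = measure_pmf.expectation p (sgnd p q) - measure_pmf.expectation q (sgnd p q)"
    and "(\<lambda>x. \<bar>pmf p x - pmf q x\<bar>) summable_on UNIV"
proof -
  note a = pmf_expect_infsum[of "sgnd p q" 1 p, OF sgnd_bdd]
  note b = pmf_expect_infsum[of "sgnd p q" 1 q, OF sgnd_bdd]
  have eq: "(\<lambda>x. pmf p x * sgnd p q x - pmf q x * sgnd p q x) = (\<lambda>x. \<bar>pmf p x - pmf q x\<bar>)"
    by (auto simp: sgnd_def sgn_real_def fun_eq_iff algebra_simps)
  have "measure_pmf.expectation p (sgnd p q) - measure_pmf.expectation q (sgnd p q)
      = (\<Sum>\<^sub>\<infinity>x. pmf p x * sgnd p q x - pmf q x * sgnd p q x)"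
    using a b by (simp add: infsum_diff)
  then show "TV p q = measure_pmf.expectation p (sgnd p q) - measure_pmf.expectation q (sgnd p q)"
    by (simp add: eq TV_def)
  show "(\<lambda>x. \<bar>pmf p x - pmf q x\<bar>) summable_on UNIV"
    using summable_on_diff[OF a(1) b(1)] by (simp add: eq)
qed

lemma E_diff_le:
  fixes p q :: "'x::countable pmf" and h :: "'x \<Rightarrow> real"
  assumes hb: "\<And>x. \<bar>h x\<bar> \<le> B"
  shows "\<bar>measure_pmf.expectation p h - measure_pmf.expectation q h\<bar> \<le> B * TV p q"
proof -
  note a = pmf_expect_infsum[of h B p, OF hb]
  note b = pmf_expect_infsum[of h B q, OF hb]
  note s = TV_eq_diff(2)[of p q]
  have B0: "0 \<le> B" using hb[of undefined] by linarith
  have e: "measure_pmf.expectation p h - measure_pmf.expectation q h = (\<Sum>\<^sub>\<infinity>x. (pmf p x - pmf q x) * h x)"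
    using a b by (simp add: infsum_diff[symmetric] left_diff_distrib)
  have sm: "(\<lambda>x. (pmf p x - pmf q x) * h x) summable_on UNIV"
    using summable_on_diff[OF a(1) b(1)] by (simp add: left_diff_distrib)
  have sB: "(\<lambda>x. B * \<bar>pmf p x - pmf q x\<bar>) summable_on UNIV"
    using s by (rule summable_on_cmult_right)
  have pt: "\<bar>(pmf p x - pmf q x) * h x\<bar> \<le> B * \<bar>pmf p x - pmf q x\<bar>" for x
    using mult_right_mono[OF hb[of x] abs_ge_zero[of "pmf p x - pmf q x"]] by (simp add: abs_mult mult.commute)
  have "(\<Sum>\<^sub>\<infinity>x. (pmf p x - pmf q x) * h x) \<le> (\<Sum>\<^sub>\<infinity>x. B * \<bar>pmf p x - pmf q x\<bar>)"
    by (rule infsum_mono[OF sm sB]) (use pt in \<open>simp add: abs_le_iff\<close>)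
  moreover have "(\<Sum>\<^sub>\<infinity>x. - (B * \<bar>pmf p x - pmf q x\<bar>)) \<le> (\<Sum>\<^sub>\<infinity>x. (pmf p x - pmf q x) * h x)"
  proof (rule infsum_mono[OF summable_on_uminus[THEN iffD2, OF sB] sm])
    fix x show "- (B * \<bar>pmf p x - pmf q x\<bar>) \<le> (pmf p x - pmf q x) * h x"
      using pt[of x] unfolding abs_le_iff by linarith
  qed
  ultimately show ?thesis
    unfolding e TV_def by (simp add: infsum_cmult_right' infsum_uminus abs_le_iff)
qed


lemma TV_nonneg: "0 \<le> TV p q"
  unfolding TV_def by (rule infsum_nonneg) auto

lemma TV_sym: "TV p q = TV q p"
  unfolding TV_def by (simp add: abs_minus_commute)

lemma TV_self: "TV p p = 0"
  unfolding TV_def by simp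

lemma TV_le2:
  fixes p q :: "'x::countable pmf"
  shows "TV p q \<le> 2"
proof -
  have "TV p q = measure_pmf.expectation p (sgnd p q) - measure_pmf.expectation q (sgnd p q)"
    by (rule TV_eq_diff(1))
  also have "\<dots> \<le> 1 + 1"
  proof -
    have a: "\<bar>measure_pmf.expectation p (sgnd p q)\<bar> \<le> 1" by (rule E_abs_le) (rule sgnd_bdd)
    have b: "\<bar>measure_pmf.expectation q (sgnd p q)\<bar> \<le> 1" by (rule E_abs_le) (rule sgnd_bdd)
    show ?thesis using a b unfolding abs_le_iff by linarith
  qed
  finally show ?thesis by simp
qed

lemma TV_tri:
  fixes p q r :: "'x::countable pmf"
  shows "TV p r \<le> TV p q + TV q r"
proof -
  have "TV p r \<le> (\<Sum>\<^sub>\<infinity>x. \<bar>pmf p x - pmf q x\<bar> + \<bar>pmf q x - pmf r x\<bar>)"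
    unfolding TV_def
    by (rule infsum_mono[OF TV_eq_diff(2) summable_on_add[OF TV_eq_diff(2) TV_eq_diff(2)]]) auto
  also have "\<dots> = TV p q + TV q r"
    unfolding TV_def by (rule infsum_add[OF TV_eq_diff(2) TV_eq_diff(2)])
  finally show ?thesis .
qed

lemma TV_bind_right:
  fixes p :: "'x::countable pmf" and f g :: "'x \<Rightarrow> 'y::countable pmf"
  shows "TV (bind_pmf p f) (bind_pmf p g) \<le> measure_pmf.expectation p (\<lambda>x. TV (f x) (g x))"
proof -
  define s where "s = sgnd (bind_pmf p f) (bind_pmf p g)"
  have sb: "\<And>y. \<bar>s y\<bar> \<le> 1" unfolding s_def by (rule sgnd_bdd)
  have i1: "integrable (measure_pmf p) (\<lambda>x. measure_pmf.expectation (f x) s)"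
    by (rule int_bdd[where B=1]) (rule E_abs_le[OF sb])
  have i2: "integrable (measure_pmf p) (\<lambda>x. measure_pmf.expectation (g x) s)"
    by (rule int_bdd[where B=1]) (rule E_abs_le[OF sb])
  have "TV (bind_pmf p f) (bind_pmf p g) = measure_pmf.expectation (bind_pmf p f) s - measure_pmf.expectation (bind_pmf p g) s"
    unfolding s_def by (rule TV_eq_diff(1))
  also have "\<dots> = measure_pmf.expectation p (\<lambda>x. measure_pmf.expectation (f x) s) - measure_pmf.expectation p (\<lambda>x. measure_pmf.expectation (g x) s)"
    proof -
    have "measure_pmf.expectation (bind_pmf p f) s = measure_pmf.expectation p (\<lambda>x. measure_pmf.expectation (f x) s)"
      by (rule integral_bind_pmf_bdd) (rule sb)
    moreover have "measure_pmf.expectation (bind_pmf p g) s = measure_pmf.expectation p (\<lambda>x. measure_pmf.expectation (g x) s)"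
      by (rule integral_bind_pmf_bdd) (rule sb)
    ultimately show ?thesis by simp
  qed
  also have "\<dots> = measure_pmf.expectation p (\<lambda>x. measure_pmf.expectation (f x) s - measure_pmf.expectation (g x) s)"
    using i1 i2 by simp
  also have "\<dots> \<le> measure_pmf.expectation p (\<lambda>x. TV (f x) (g x))"
  proof (rule integral_mono)
    show "integrable (measure_pmf p) (\<lambda>x. measure_pmf.expectation (f x) s - measure_pmf.expectation (g x) s)"
      using i1 i2 by simp
    show "integrable (measure_pmf p) (\<lambda>x. TV (f x) (g x))"
      by (rule int_bdd[where B=2]) (simp add: abs_of_nonneg[OF TV_nonneg] TV_le2)
    show "measure_pmf.expectation (f x) s - measure_pmf.expectation (g x) s \<le> TV (f x) (g x)" for x
    proof -
      have "\<bar>measure_pmf.expectation (f x) s - measure_pmf.expectation (g x) s\<bar> \<le> 1 * TV (f x) (g x)"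
        by (rule E_diff_le) (rule sb)
      then show ?thesis by simp
    qed
  qed
  finally show ?thesis .
qed

lemma TV_bind_left:
  fixes p q :: "'x::countable pmf" and f :: "'x \<Rightarrow> 'y::countable pmf"
  shows "TV (bind_pmf p f) (bind_pmf q f) \<le> TV p q"
proof -
  define s where "s = sgnd (bind_pmf p f) (bind_pmf q f)"
  have sb: "\<And>y. \<bar>s y\<bar> \<le> 1" unfolding s_def by (rule sgnd_bdd)
  have kb: "\<And>x. \<bar>measure_pmf.expectation (f x) s\<bar> \<le> 1" by (rule E_abs_le[OF sb])
  have "TV (bind_pmf p f) (bind_pmf q f) = measure_pmf.expectation (bind_pmf p f) s - measure_pmf.expectation (bind_pmf q f) s"
    unfolding s_def by (rule TV_eq_diff(1))
  also have "\<dots> = measure_pmf.expectation p (\<lambda>x. measure_pmf.expectation (f x) s) - measure_pmf.expectation q (\<lambda>x. measure_pmf.expectation (f x) s)"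
    proof -
    have "measure_pmf.expectation (bind_pmf p f) s = measure_pmf.expectation p (\<lambda>x. measure_pmf.expectation (f x) s)"
      by (rule integral_bind_pmf_bdd) (rule sb)
    moreover have "measure_pmf.expectation (bind_pmf q f) s = measure_pmf.expectation q (\<lambda>x. measure_pmf.expectation (f x) s)"
      by (rule integral_bind_pmf_bdd) (rule sb)
    ultimately show ?thesis by simp
  qed
  also have "\<dots> \<le> 1 * TV p q"
  proof -
    have "\<bar>measure_pmf.expectation p (\<lambda>x. measure_pmf.expectation (f x) s) - measure_pmf.expectation q (\<lambda>x. measure_pmf.expectation (f x) s)\<bar> \<le> 1 * TV p q"
      by (rule E_diff_le) (rule kb)
    then show ?thesis by simp
  qed
  finally show ?thesis by simp
qed


lemma infsum_nat_suminf:
  fixes f :: "nat \<Rightarrow> real"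
  assumes "f summable_on UNIV"
  shows "f sums (\<Sum>\<^sub>\<infinity>t. f t)"
  using assms by (intro has_sum_imp_sums has_sum_infsum)

lemma geo_E:
  fixes h :: "nat \<Rightarrow> real" and \<gamma> :: real
  assumes g: "0 \<le> \<gamma>" "\<gamma> < 1" and hb: "\<And>t. \<bar>h t\<bar> \<le> B"
  shows "measure_pmf.expectation (geometric_pmf (1 - \<gamma>)) h = (1 - \<gamma>) * (\<Sum>t. \<gamma> ^ t * h t)"
    and "summable (\<lambda>t. \<gamma> ^ t * h t)"
proof -
  note e = pmf_expect_infsum[OF hb, of "geometric_pmf (1 - \<gamma>)"]
  have pg: "pmf (geometric_pmf (1 - \<gamma>)) t = \<gamma> ^ t * (1 - \<gamma>)" for t
    using g by simp
  define S where "S = measure_pmf.expectation (geometric_pmf (1 - \<gamma>)) h"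
  have "(\<lambda>t. pmf (geometric_pmf (1 - \<gamma>)) t * h t) sums S"
    unfolding S_def e(2) by (rule infsum_nat_suminf[OF e(1)])
  then have "(\<lambda>t. \<gamma> ^ t * (1 - \<gamma>) * h t) sums S" by (simp add: pg)
  then have "(\<lambda>t. \<gamma> ^ t * (1 - \<gamma>) * h t / (1 - \<gamma>)) sums (S / (1 - \<gamma>))"
    by (rule sums_divide)
  then have *: "(\<lambda>t. \<gamma> ^ t * h t) sums (S / (1 - \<gamma>))"
    using g by simp
  then show "summable (\<lambda>t. \<gamma> ^ t * h t)" by (rule sums_summable)
  show "S = (1 - \<gamma>) * (\<Sum>t. \<gamma> ^ t * h t)"
    using * g by (simp add: sums_iff)
qed

definition Occ :: "real \<Rightarrow> 's \<Rightarrow> ('s \<Rightarrow> 'a \<Rightarrow> 's pmf) \<Rightarrow> ('s \<Rightarrow> 'a pmf) \<Rightarrow> ('s \<times> 'a) pmf" where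
  "Occ \<gamma> s0 T pol = bind_pmf (geometric_pmf (1 - \<gamma>)) (sa_dist T pol s0)"

lemma occ_pmf:
  assumes g: "0 \<le> \<gamma>" "\<gamma> < 1"
  shows "occ \<gamma> s0 T pol = pmf (Occ \<gamma> s0 T pol)"
proof
  fix x
  have b: "\<bar>pmf (sa_dist T pol s0 t) x\<bar> \<le> 1" for t by (simp add: pmf_le_1)
  show "occ \<gamma> s0 T pol x = pmf (Occ \<gamma> s0 T pol) x"
    unfolding Occ_def pmf_bind occ_def geo_E(1)[OF g b] ..
qed

lemma expect_Occ:
  fixes f :: "'s \<times> 'a \<Rightarrow> real"
  assumes g: "0 \<le> \<gamma>" "\<gamma> < 1" and fb: "\<And>x. \<bar>f x\<bar> \<le> B"
  shows "measure_pmf.expectation (Occ \<gamma> s0 T pol) f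
     = (1 - \<gamma>) * (\<Sum>t. \<gamma> ^ t * measure_pmf.expectation (sa_dist T pol s0 t) f)"
  unfolding Occ_def integral_bind_pmf_bdd[OF fb]
  by (rule geo_E(1)[OF g]) (rule E_abs_le[OF fb])

lemma Eocc_eq:
  fixes f :: "'s::countable \<times> 'a::countable \<Rightarrow> real"
  assumes g: "0 \<le> \<gamma>" "\<gamma> < 1" and fb: "\<And>x. \<bar>f x\<bar> \<le> B"
  shows "Eocc \<gamma> s0 T pol f = measure_pmf.expectation (Occ \<gamma> s0 T pol) f"
  unfolding Eocc_def occ_pmf[OF g] pmf_expect_infsum(2)[OF fb] ..

lemma eta_eq:
  fixes r :: "'s \<times> 'a \<Rightarrow> real"
  assumes g: "0 \<le> \<gamma>" "\<gamma> < 1" and rb: "\<And>x. \<bar>r x\<bar> \<le> B"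
  shows "eta \<gamma> r s0 T pol = measure_pmf.expectation (Occ \<gamma> s0 T pol) r / (1 - \<gamma>)"
  unfolding eta_def expect_Occ[OF g rb] using g by simp


lemma Occ_TV:
  fixes T Ts :: "'s::countable \<Rightarrow> 'a::countable \<Rightarrow> 's pmf"
  assumes g: "0 \<le> \<gamma>" "\<gamma> < 1"
  shows "TV (Occ \<gamma> s0 T pol) (Occ \<gamma> s0 Ts pol)
     \<le> \<gamma> / (1 - \<gamma>) * measure_pmf.expectation (Occ \<gamma> s0 Ts pol) (\<lambda>(s, a). TV (T s a) (Ts s a))"
proof -
  define tv where "tv = (\<lambda>(s, a). TV (T s a) (Ts s a))"
  define a where "a t = TV (sa_dist T pol s0 t) (sa_dist Ts pol s0 t)" for t
  define e where "e t = measure_pmf.expectation (sa_dist Ts pol s0 t) tv" for t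
  define K where "K T' = (\<lambda>(s, a). bind_pmf (T' s a) (\<lambda>s'. map_pmf (\<lambda>a'. (s', a')) (pol s')))"
    for T' :: "'s \<Rightarrow> 'a \<Rightarrow> 's pmf"
  have tvb: "\<bar>tv x\<bar> \<le> 2" for x
    unfolding tv_def by (cases x) (simp add: abs_of_nonneg[OF TV_nonneg] TV_le2)
  have ab: "\<bar>a t\<bar> \<le> 2" for t
    unfolding a_def by (simp add: abs_of_nonneg[OF TV_nonneg] TV_le2)
  have eb: "\<bar>e t\<bar> \<le> 2" for t
    unfolding e_def by (rule E_abs_le) (rule tvb)
  have a0: "a 0 = 0" by (simp add: a_def TV_self)
  have aS: "a (Suc t) \<le> a t + e t" for t
  proof -
    have sT: "sa_dist T' pol s0 (Suc t) = bind_pmf (sa_dist T' pol s0 t) (K T')" for T'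
      by (simp add: K_def)
    have "a (Suc t) \<le> TV (bind_pmf (sa_dist T pol s0 t) (K T)) (bind_pmf (sa_dist Ts pol s0 t) (K T))
        + TV (bind_pmf (sa_dist Ts pol s0 t) (K T)) (bind_pmf (sa_dist Ts pol s0 t) (K Ts))"
      unfolding a_def sT by (rule TV_tri)
    also have "\<dots> \<le> a t + measure_pmf.expectation (sa_dist Ts pol s0 t) (\<lambda>x. TV (K T x) (K Ts x))"
      unfolding a_def by (intro add_mono TV_bind_left TV_bind_right)
    also have "measure_pmf.expectation (sa_dist Ts pol s0 t) (\<lambda>x. TV (K T x) (K Ts x)) \<le> e t"
      unfolding e_def
    proof (rule integral_mono)
      show "integrable (measure_pmf (sa_dist Ts pol s0 t)) (\<lambda>x. TV (K T x) (K Ts x))"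
        by (rule int_bdd[where B=2]) (simp add: abs_of_nonneg[OF TV_nonneg] TV_le2)
      show "integrable (measure_pmf (sa_dist Ts pol s0 t)) tv"
        by (rule int_bdd[where B=2]) (rule tvb)
      show "TV (K T x) (K Ts x) \<le> tv x" for x
        unfolding K_def tv_def by (cases x) (simp add: TV_bind_left)
    qed
    finally show ?thesis by simp
  qed
  define A where "A = (\<Sum>t. \<gamma> ^ t * a t)"
  define Ee where "Ee = (\<Sum>t. \<gamma> ^ t * e t)"
  have GA1: "measure_pmf.expectation (geometric_pmf (1 - \<gamma>)) a = (1 - \<gamma>) * A"
    unfolding A_def using geo_E(1)[OF g, where h=a and B=2] ab by blast
  have GA2: "summable (\<lambda>t. \<gamma> ^ t * a t)"
    using geo_E(2)[OF g, where h=a and B=2] ab by blast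
  have GE2: "summable (\<lambda>t. \<gamma> ^ t * e t)"
    using geo_E(2)[OF g, where h=e and B=2] eb by blast
  note GA = GA1 GA2
  note GE = GE2 GE2
  have "TV (Occ \<gamma> s0 T pol) (Occ \<gamma> s0 Ts pol) \<le> measure_pmf.expectation (geometric_pmf (1 - \<gamma>)) a"
    unfolding Occ_def a_def by (rule TV_bind_right)
  also have "\<dots> = (1 - \<gamma>) * A" by (rule GA1)
  finally have tv1: "TV (Occ \<gamma> s0 T pol) (Occ \<gamma> s0 Ts pol) \<le> (1 - \<gamma>) * A" .
  have eo: "measure_pmf.expectation (Occ \<gamma> s0 Ts pol) tv = (1 - \<gamma>) * Ee"
    unfolding Ee_def e_def by (rule expect_Occ[OF g tvb])
  have s1: "summable (\<lambda>t. \<gamma> ^ Suc t * a (Suc t))"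
    using GA(2) by (subst summable_Suc_iff)
  have s2: "summable (\<lambda>t. \<gamma> * (\<gamma> ^ t * a t + \<gamma> ^ t * e t))"
    by (intro summable_mult summable_add GA(2) GE(2))
  have "A = (\<Sum>t. \<gamma> ^ Suc t * a (Suc t))"
  proof -
    have "(\<Sum>n. (\<lambda>t. \<gamma> ^ t * a t) (Suc n)) = suminf (\<lambda>t. \<gamma> ^ t * a t) - (\<lambda>t. \<gamma> ^ t * a t) 0"
      by (rule suminf_split_head) (rule GA2)
    then show ?thesis using a0 unfolding A_def by simp
  qed
  also have "\<dots> \<le> (\<Sum>t. \<gamma> * (\<gamma> ^ t * a t + \<gamma> ^ t * e t))"
  proof (rule suminf_le[OF _ s1 s2])
    fix t
    have "\<gamma> ^ Suc t * a (Suc t) \<le> \<gamma> ^ Suc t * (a t + e t)"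
      using aS[of t] g by (intro mult_left_mono) auto
    then show "\<gamma> ^ Suc t * a (Suc t) \<le> \<gamma> * (\<gamma> ^ t * a t + \<gamma> ^ t * e t)"
      by (simp add: algebra_simps)
  qed
  also have "\<dots> = \<gamma> * (A + Ee)"
  proof -
    have "(\<Sum>t. \<gamma> * (\<gamma> ^ t * a t + \<gamma> ^ t * e t)) = \<gamma> * (\<Sum>t. \<gamma> ^ t * a t + \<gamma> ^ t * e t)"
      by (rule suminf_mult) (intro summable_add GA2 GE2)
    also have "(\<Sum>t. \<gamma> ^ t * a t + \<gamma> ^ t * e t) = (\<Sum>t. \<gamma> ^ t * a t) + (\<Sum>t. \<gamma> ^ t * e t)"
      by (rule suminf_add[OF GA2 GE2, symmetric])
    finally show ?thesis by (simp add: A_def Ee_def)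
  qed
  finally have "A \<le> \<gamma> * (A + Ee)" .
  then have "(1 - \<gamma>) * A \<le> \<gamma> * Ee" by (simp add: algebra_simps)
  also have "\<gamma> * Ee = \<gamma> / (1 - \<gamma>) * ((1 - \<gamma>) * Ee)" using g by simp
  finally show ?thesis using tv1 eo unfolding tv_def by simp
qed

lemma final_arith:
  fixes c V D e0 e M S Z I em etaT etaS :: real
  assumes c: "0 < c" "c \<le> 1" and V: "0 \<le> V" and D: "0 \<le> D" "D * c \<le> e0"
    and e: "0 \<le> e0" "e0 \<le> e"
    and M: "M \<le> S + Z + V * (e0 + 2 * D)" and I: "I \<le> em + 2 * D"
    and et: "etaS - V * D \<le> etaT"
  shows "etaS - 6 * V * e / c^2 - 1 / c * (V * em + S + Z) \<le> etaT - 1 / c * (M + V * I)"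
proof -
  have VI: "V * I \<le> V * em + 2 * V * D" using mult_left_mono[OF I V] by (simp add: algebra_simps)
  have "M + V * I \<le> (V * em + S + Z) + (V * e0 + 4 * V * D)" using M VI by (simp add: algebra_simps)
  then have 1: "1 / c * (M + V * I) \<le> 1 / c * (V * em + S + Z) + (V * e0 + 4 * V * D) / c"
    using c by (simp add: divide_right_mono add_divide_distrib[symmetric] divide_simps) 
  have k1: "V * D * c\<^sup>2 \<le> V * e" 
  proof -
    have "D * c * c \<le> e0 * 1" using D c e by (intro mult_mono) auto
    then have "D * c\<^sup>2 \<le> e" using e by (simp add: power2_eq_square mult.assoc)
    then show ?thesis using V by (metis mult.assoc mult_left_mono)
  qed
  have k2: "V * e0 * c \<le> V * e"
  proof -
    have "e0 * c \<le> e * 1" using e c by (intro mult_mono) auto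
    then show ?thesis using V by (metis mult.assoc mult_left_mono mult_1_right)
  qed
  have k3: "4 * V * D * c \<le> 4 * V * e"
  proof -
    have "D * c \<le> e" using D e by linarith
    then show ?thesis using V by (metis mult.assoc mult_left_mono mult_le_cancel_left_pos zero_less_numeral)
  qed
  have "V * D * c\<^sup>2 + V * e0 * c + 4 * V * D * c \<le> 6 * V * e" using k1 k2 k3 by linarith
  then have "(V * D * c\<^sup>2 + V * e0 * c + 4 * V * D * c) / c\<^sup>2 \<le> 6 * V * e / c\<^sup>2"
    using c by (intro divide_right_mono) auto
  moreover have "V * D + (V * e0 + 4 * V * D) / c = (V * D * c\<^sup>2 + V * e0 * c + 4 * V * D * c) / c\<^sup>2"
    using c by (simp add: field_simps power2_eq_square)
  ultimately have 2: "V * D + (V * e0 + 4 * V * D) / c \<le> 6 * V * e / c\<^sup>2"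
    by simp
  show ?thesis using 1 2 et by linarith
qed


lemma ind_pt:
  fixes P Ps :: "'x \<Rightarrow> real" and muh :: "'x pmf"
  assumes "0 \<le> P x" "0 \<le> Ps x" "0 < \<zeta>"
  shows "Ps x * (if ratio_gt P muh \<zeta> x then 1 else 0)
     \<le> Ps x * (if ratio_gt Ps muh (\<zeta> / 2) x then 1 else 0) + \<bar>P x - Ps x\<bar>"
proof (cases "ratio_gt P muh \<zeta> x \<and> \<not> ratio_gt Ps muh (\<zeta> / 2) x")
  case True
  have m0: "0 \<le> pmf muh x" by simp
  show ?thesis
  proof (cases "pmf muh x = 0")
    case z: True
    then have "Ps x = 0" using True assms unfolding ratio_gt_def by auto
    then show ?thesis using True by simp
  next
    case False
    then have mp: "0 < pmf muh x" using m0 by linarith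
    have "\<zeta> < P x / pmf muh x" using True False unfolding ratio_gt_def by auto
    then have 1: "\<zeta> * pmf muh x < P x" using mp by (simp add: pos_less_divide_eq)
    have "Ps x / pmf muh x \<le> \<zeta> / 2" using True False unfolding ratio_gt_def by auto
    then have 2: "Ps x \<le> \<zeta> / 2 * pmf muh x" using mp by (simp add: pos_divide_le_eq)
    have "Ps x \<le> P x - Ps x" using 1 2 by linarith
    then show ?thesis using True assms by simp
  qed
next
  case False
  then show ?thesis using assms by (auto simp: mult_le_cancel_left1)
qed

lemma wgt_props:
  fixes P :: "'x \<Rightarrow> real" and muh :: "'x pmf"
  assumes "0 \<le> P x" "0 < \<zeta>"
  shows "0 \<le> wgt \<zeta> P muh x" "wgt \<zeta> P muh x \<le> \<zeta>" "pmf muh x * wgt \<zeta> P muh x \<le> P x"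
proof -
  have m0: "0 \<le> pmf muh x" by simp
  show "0 \<le> wgt \<zeta> P muh x" using assms m0 unfolding wgt_def by auto
  show "wgt \<zeta> P muh x \<le> \<zeta>" using assms m0 unfolding wgt_def ratio_gt_def by (auto split: if_splits)
  show "pmf muh x * wgt \<zeta> P muh x \<le> P x" using assms m0 unfolding wgt_def by auto
qed

theorem lemma3:
  fixes \<gamma> \<zeta> \<delta> \<iota> :: real
    and r :: "'s::countable \<times> 'a::countable \<Rightarrow> real"
    and s0 :: 's
    and Tstar :: "'s \<Rightarrow> 'a \<Rightarrow> 's pmf"
    and muh :: "('s \<times> 'a) pmf"
    and mu :: "('s \<times> 'a \<times> 's) pmf"
    and D :: "('s \<times> 'a \<times> 's) list"
    and G :: "('s \<Rightarrow> real) set"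
    and TT :: "('s \<Rightarrow> 'a \<Rightarrow> 's pmf) set"
    and Pi :: "('s \<Rightarrow> 'a pmf) set"
    and pol :: "'s \<Rightarrow> 'a pmf"
  assumes gamma: "0 \<le> \<gamma>" "\<gamma> < 1"
    and r_nonneg: "\<And>x. 0 \<le> r x"
    and r_bdd: "bdd_above (range r)"
    and zeta: "\<zeta> > 0"
    and delta: "0 < \<delta>" "\<delta> < 1"
    and n_pos: "length D > 0"
    and mu_cond: "\<And>s a s'. pmf mu (s, a, s') = pmf (sa_marg mu) (s, a) * pmf (Tstar s a) s'"
    and G_fin: "finite G" "G \<noteq> {}"
    and TT_fin: "finite TT" "TT \<noteq> {}"
    and Pi_fin: "finite Pi" "Pi \<noteq> {}"
    and G_range: "\<And>g s. g \<in> G \<Longrightarrow> 0 \<le> g s \<and> g s \<le> Vmax \<gamma> r"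
    and iota: "\<iota> = ln (2 * real (card G) * real (card TT) * real (card Pi) / \<delta>)"
    and event_E: "\<forall>p\<in>Pi. \<forall>g\<in>G. \<forall>T\<in>TT.
        \<bar>Lpop \<gamma> s0 \<zeta> muh mu Tstar p g T - lsamp \<gamma> s0 \<zeta> muh D p g T\<bar>
          \<le> 2 * Vmax \<gamma> r * sqrt (\<zeta> * \<iota> / real (length D))"
    and pol_in: "pol \<in> Pi"
  shows "(MAX T\<in>TT. lb \<gamma> r s0 \<zeta> muh D G T pol)
     \<ge> eta \<gamma> r s0 Tstar pol
       - 6 * Vmax \<gamma> r * eps_rho \<gamma> s0 TT Tstar pol / (1 - \<gamma>)^2
       - 1 / (1 - \<gamma>) * (Vmax \<gamma> r * eps_mu \<gamma> s0 \<zeta> muh Tstar pol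
            + 2 * Vmax \<gamma> r * sqrt (\<zeta> * \<iota> / real (length D))
            + \<zeta> * Vmax \<gamma> r * TV muh (sa_marg mu))"
proof -
  define V where "V = Vmax \<gamma> r"
  define R where "R = Rmax r"
  have rle: "r x \<le> R" for x
    unfolding R_def Rmax_def by (rule cSUP_upper[OF UNIV_I r_bdd])
  have R0: "0 \<le> R" using rle[of undefined] r_nonneg[of undefined] by linarith
  have rb: "\<bar>r x\<bar> \<le> R" for x using rle[of x] r_nonneg[of x] by simp
  have c0: "0 < 1 - \<gamma>" using gamma by simp
  have VR: "V = R / (1 - \<gamma>)" by (simp add: V_def Vmax_def R_def)
  have V0: "0 \<le> V" unfolding VR using R0 c0 by simp
  define f where "f T = Eocc \<gamma> s0 Tstar pol (\<lambda>(s, a). TV (T s a) (Tstar s a))" for T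
  have fin: "finite (f ` TT)" "f ` TT \<noteq> {}" using TT_fin by auto
  obtain T0 where T0: "T0 \<in> TT" "f T0 = Min (f ` TT)"
    using Min_in[OF fin] by auto
  have fmin: "f T0 \<le> f T" if "T \<in> TT" for T
    using T0(2) Min_le[OF fin(1)] that by simp
  have "f T0 \<le> (INF T\<in>TT. f T)"
    by (rule cINF_greatest[OF TT_fin(2)]) (rule fmin)
  also have "(INF T\<in>TT. f T) = eps_rho \<gamma> s0 TT Tstar pol"
    by (simp add: eps_rho_def f_def)
  finally have fT0le: "f T0 \<le> eps_rho \<gamma> s0 TT Tstar pol" .
  define tv where "tv = (\<lambda>(s, a). TV (T0 s a) (Tstar s a))"
  have tvb: "\<bar>tv x\<bar> \<le> 2" for x
    unfolding tv_def by (cases x) (simp add: abs_of_nonneg[OF TV_nonneg] TV_le2)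
  have tv0: "0 \<le> tv x" for x
    unfolding tv_def by (cases x) (simp add: TV_nonneg)
  define \<rho> where "\<rho> = Occ \<gamma> s0 T0 pol"
  define \<rho>s where "\<rho>s = Occ \<gamma> s0 Tstar pol"
  define \<Delta> where "\<Delta> = TV \<rho> \<rho>s"
  define \<epsilon>0 where "\<epsilon>0 = measure_pmf.expectation \<rho>s tv"
  have "f T0 = \<epsilon>0"
    unfolding f_def \<epsilon>0_def \<rho>s_def tv_def[symmetric]
    using Eocc_eq[OF gamma, where f=tv and B=2] tvb by blast
  with fT0le have e0le: "\<epsilon>0 \<le> eps_rho \<gamma> s0 TT Tstar pol" by simp
  have e00: "0 \<le> \<epsilon>0" unfolding \<epsilon>0_def by (rule Bochner_Integration.integral_nonneg) (simp add: tv0)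
  have D0: "0 \<le> \<Delta>" unfolding \<Delta>_def by (rule TV_nonneg)
  have Dle: "\<Delta> \<le> \<gamma> / (1 - \<gamma>) * \<epsilon>0"
    unfolding \<Delta>_def \<rho>_def \<rho>s_def \<epsilon>0_def tv_def by (rule Occ_TV[OF gamma])
  have Dc: "\<Delta> * (1 - \<gamma>) \<le> \<epsilon>0"
  proof -
    have "\<Delta> * (1 - \<gamma>) \<le> \<gamma> / (1 - \<gamma>) * \<epsilon>0 * (1 - \<gamma>)"
      using Dle c0 by (intro mult_right_mono) auto
    also have "\<dots> = \<gamma> * \<epsilon>0" using c0 by simp
    also have "\<dots> \<le> 1 * \<epsilon>0" using gamma e00 by (intro mult_right_mono) auto
    finally show ?thesis by simp
  qed
  have etaT: "eta \<gamma> r s0 T0 pol = measure_pmf.expectation \<rho> r / (1 - \<gamma>)"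
    unfolding \<rho>_def using eta_eq[OF gamma, where r=r and B=R] rb by blast
  have etaS: "eta \<gamma> r s0 Tstar pol = measure_pmf.expectation \<rho>s r / (1 - \<gamma>)"
    unfolding \<rho>s_def using eta_eq[OF gamma, where r=r and B=R] rb by blast
  have "\<bar>measure_pmf.expectation \<rho> r - measure_pmf.expectation \<rho>s r\<bar> \<le> R * \<Delta>"
    unfolding \<Delta>_def by (rule E_diff_le) (rule rb)
  then have "measure_pmf.expectation \<rho>s r - measure_pmf.expectation \<rho> r \<le> R * \<Delta>" by linarith
  then have "(measure_pmf.expectation \<rho>s r - measure_pmf.expectation \<rho> r) / (1 - \<gamma>) \<le> R * \<Delta> / (1 - \<gamma>)"
    using c0 by (intro divide_right_mono) auto
  then have eta_bd: "eta \<gamma> r s0 Tstar pol - V * \<Delta> \<le> eta \<gamma> r s0 T0 pol"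
    unfolding etaT etaS VR by (simp add: diff_divide_distrib)
  have occT0: "occ \<gamma> s0 T0 pol = pmf \<rho>" unfolding \<rho>_def by (rule occ_pmf[OF gamma])
  have occS: "occ \<gamma> s0 Tstar pol = pmf \<rho>s" unfolding \<rho>s_def by (rule occ_pmf[OF gamma])
  define ind where "ind x = (if ratio_gt (pmf \<rho>) muh \<zeta> x then 1 else 0 :: real)" for x
  define inds where "inds x = (if ratio_gt (pmf \<rho>s) muh (\<zeta> / 2) x then 1 else 0 :: real)" for x
  have indb: "\<bar>ind x\<bar> \<le> 1" for x by (simp add: ind_def)
  have indsb: "\<bar>inds x\<bar> \<le> 1" for x by (simp add: inds_def)
  define I where "I = Eocc \<gamma> s0 T0 pol (\<lambda>x. if ratio_gt (occ \<gamma> s0 T0 pol) muh \<zeta> x then 1 else 0)"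
  have I_eq: "I = measure_pmf.expectation \<rho> ind"
  proof -
    have "(\<lambda>x. if ratio_gt (occ \<gamma> s0 T0 pol) muh \<zeta> x then 1 else 0) = ind"
      by (simp add: fun_eq_iff ind_def occT0)
    then show ?thesis
      unfolding I_def \<rho>_def using Eocc_eq[OF gamma, where f=ind and B=1] indb by simp
  qed
  have em_eq: "eps_mu \<gamma> s0 \<zeta> muh Tstar pol = (\<Sum>\<^sub>\<infinity>x. pmf \<rho>s x * inds x)"
    unfolding eps_mu_def Eocc_def occS inds_def ..
  have "\<bar>measure_pmf.expectation \<rho> ind - measure_pmf.expectation \<rho>s ind\<bar> \<le> 1 * \<Delta>"
    unfolding \<Delta>_def by (rule E_diff_le) (rule indb)
  then have I1: "I \<le> measure_pmf.expectation \<rho>s ind + \<Delta>" unfolding I_eq by simp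
  have sm1: "(\<lambda>x. pmf \<rho>s x * ind x) summable_on UNIV"
    using pmf_expect_infsum(1)[where h=ind and B=1] indb by blast
  have sm2: "(\<lambda>x. pmf \<rho>s x * inds x) summable_on UNIV"
    using pmf_expect_infsum(1)[where h=inds and B=1] indsb by blast
  have sm3: "(\<lambda>x. \<bar>pmf \<rho> x - pmf \<rho>s x\<bar>) summable_on UNIV" by (rule TV_eq_diff(2))
  have "measure_pmf.expectation \<rho>s ind = (\<Sum>\<^sub>\<infinity>x. pmf \<rho>s x * ind x)"
    using pmf_expect_infsum(2)[where h=ind and B=1] indb by blast
  also have "\<dots> \<le> (\<Sum>\<^sub>\<infinity>x. pmf \<rho>s x * inds x + \<bar>pmf \<rho> x - pmf \<rho>s x\<bar>)"
  proof (rule infsum_mono[OF sm1 summable_on_add[OF sm2 sm3]])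
    fix x
    show "pmf \<rho>s x * ind x \<le> pmf \<rho>s x * inds x + \<bar>pmf \<rho> x - pmf \<rho>s x\<bar>"
      unfolding ind_def inds_def using zeta by (intro ind_pt) auto
  qed
  also have "\<dots> = eps_mu \<gamma> s0 \<zeta> muh Tstar pol + \<Delta>"
    unfolding em_eq \<Delta>_def TV_def by (rule infsum_add[OF sm2 sm3])
  finally have I_bd: "I \<le> eps_mu \<gamma> s0 \<zeta> muh Tstar pol + 2 * \<Delta>" using I1 by linarith
  define S where "S = 2 * V * sqrt (\<zeta> * \<iota> / real (length D))"
  define Z where "Z = \<zeta> * V * TV muh (sa_marg mu)"
  define w where "w = wgt \<zeta> (pmf \<rho>) muh"
  have w0: "0 \<le> w x" and wz: "w x \<le> \<zeta>" and wm: "pmf muh x * w x \<le> pmf \<rho> x" for x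
    unfolding w_def using wgt_props[of "pmf \<rho>" x \<zeta> muh] zeta by auto
  have Etv: "measure_pmf.expectation \<rho> tv \<le> \<epsilon>0 + 2 * \<Delta>"
  proof -
    have "\<bar>measure_pmf.expectation \<rho> tv - measure_pmf.expectation \<rho>s tv\<bar> \<le> 2 * \<Delta>"
      unfolding \<Delta>_def by (rule E_diff_le) (rule tvb)
    then show ?thesis unfolding \<epsilon>0_def by linarith
  qed
  have Gb: "\<bar>lemp D (wgt \<zeta> (occ \<gamma> s0 T0 pol) muh) g T0\<bar> \<le> S + Z + V * (\<epsilon>0 + 2 * \<Delta>)"
    if gG: "g \<in> G" for g
  proof -
    have gb: "\<bar>g s\<bar> \<le> V" for s using G_range[OF gG, of s] unfolding V_def by auto
    have gn: "0 \<le> g s" for s using G_range[OF gG, of s] by auto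
    define h where "h x = w x * (fT T0 g x - fT Tstar g x)" for x
    have df: "\<bar>fT T0 g x - fT Tstar g x\<bar> \<le> V * tv x" for x
    proof (cases x)
      case (Pair s a)
      show ?thesis unfolding Pair fT_def tv_def by simp (rule E_diff_le, rule gb)
    qed
    have Eg: "0 \<le> measure_pmf.expectation p g \<and> measure_pmf.expectation p g \<le> V" for p :: "'s pmf"
    proof
      show "0 \<le> measure_pmf.expectation p g" by (rule Bochner_Integration.integral_nonneg) (simp add: gn)
      have "\<bar>measure_pmf.expectation p g\<bar> \<le> V" by (rule E_abs_le) (rule gb)
      then show "measure_pmf.expectation p g \<le> V" by simp
    qed
    have df2: "\<bar>fT T0 g x - fT Tstar g x\<bar> \<le> V" for x
      unfolding fT_def using Eg[of "T0 (fst x) (snd x)"] Eg[of "Tstar (fst x) (snd x)"] by linarith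
    have hb: "\<bar>h x\<bar> \<le> \<zeta> * V" for x
      unfolding h_def abs_mult using w0[of x] wz[of x] df2[of x] V0
      by (simp add: mult_mono)
    have hb2: "\<bar>h x\<bar> \<le> w x * (V * tv x)" for x
      unfolding h_def abs_mult using w0[of x] df[of x] by (simp add: mult_left_mono)
    have wtb: "\<bar>w x * (V * tv x)\<bar> \<le> \<zeta> * (V * 2)" for x
    proof -
      have "w x * (V * tv x) \<le> \<zeta> * (V * 2)"
        using w0[of x] wz[of x] tv0[of x] tvb[of x] V0
        by (intro mult_mono) (auto intro: mult_left_mono)
      moreover have "0 \<le> w x * (V * tv x)" using w0[of x] tv0[of x] V0 by simp
      ultimately show ?thesis by simp
    qed
    have vtb: "\<bar>V * tv x\<bar> \<le> V * 2" for x
      using tv0[of x] tvb[of x] V0 by (simp add: abs_mult mult_left_mono)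
    have L_eq: "Lpop \<gamma> s0 \<zeta> muh mu Tstar pol g T0 = measure_pmf.expectation (sa_marg mu) h"
      unfolding Lpop_def h_def w_def occT0 ..
    have l_eq: "lsamp \<gamma> s0 \<zeta> muh D pol g T0 = lemp D (wgt \<zeta> (occ \<gamma> s0 T0 pol) muh) g T0"
      unfolding lsamp_def ..
    have ev: "\<bar>Lpop \<gamma> s0 \<zeta> muh mu Tstar pol g T0 - lsamp \<gamma> s0 \<zeta> muh D pol g T0\<bar> \<le> S"
      using event_E pol_in gG T0(1) unfolding S_def V_def by blast
    have "\<bar>measure_pmf.expectation muh h - measure_pmf.expectation (sa_marg mu) h\<bar> \<le> \<zeta> * V * TV muh (sa_marg mu)"
      by (rule E_diff_le) (rule hb)
    then have L1: "\<bar>measure_pmf.expectation (sa_marg mu) h\<bar> \<le> \<bar>measure_pmf.expectation muh h\<bar> + Z"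
      unfolding Z_def by linarith
    have "\<bar>measure_pmf.expectation muh h\<bar> \<le> measure_pmf.expectation muh (\<lambda>x. \<bar>h x\<bar>)"
      by (rule integral_abs_bound)
    also have "\<dots> \<le> measure_pmf.expectation muh (\<lambda>x. w x * (V * tv x))"
    proof (rule integral_mono)
      show "integrable (measure_pmf muh) (\<lambda>x. \<bar>h x\<bar>)"
        by (rule int_bdd[where B="\<zeta> * V"]) (simp add: hb)
      show "integrable (measure_pmf muh) (\<lambda>x. w x * (V * tv x))"
        by (rule int_bdd[where B="\<zeta> * (V * 2)"]) (rule wtb)
      show "\<bar>h x\<bar> \<le> w x * (V * tv x)" for x by (rule hb2)
    qed
    also have "\<dots> = (\<Sum>\<^sub>\<infinity>x. pmf muh x * (w x * (V * tv x)))"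
      using pmf_expect_infsum(2)[where h="\<lambda>x. w x * (V * tv x)" and B="\<zeta> * (V * 2)"] wtb by blast
    also have "\<dots> \<le> (\<Sum>\<^sub>\<infinity>x. pmf \<rho> x * (V * tv x))"
    proof (rule infsum_mono)
      show "(\<lambda>x. pmf muh x * (w x * (V * tv x))) summable_on UNIV"
        using pmf_expect_infsum(1)[where h="\<lambda>x. w x * (V * tv x)" and B="\<zeta> * (V * 2)"] wtb by blast
      show "(\<lambda>x. pmf \<rho> x * (V * tv x)) summable_on UNIV"
        using pmf_expect_infsum(1)[where h="\<lambda>x. V * tv x" and B="V * 2"] vtb by blast
      fix x
      have "pmf muh x * w x * (V * tv x) \<le> pmf \<rho> x * (V * tv x)"
        using wm[of x] tv0[of x] V0 by (intro mult_right_mono) auto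
      then show "pmf muh x * (w x * (V * tv x)) \<le> pmf \<rho> x * (V * tv x)"
        by (simp add: mult.assoc)
    qed
    also have "\<dots> = measure_pmf.expectation \<rho> (\<lambda>x. V * tv x)"
      using pmf_expect_infsum(2)[where h="\<lambda>x. V * tv x" and B="V * 2"] vtb by (metis (no_types, lifting))
    also have "\<dots> = V * measure_pmf.expectation \<rho> tv" by simp
    also have "\<dots> \<le> V * (\<epsilon>0 + 2 * \<Delta>)" using Etv V0 by (rule mult_left_mono)
    finally have "\<bar>measure_pmf.expectation muh h\<bar> \<le> V * (\<epsilon>0 + 2 * \<Delta>)" .
    then show ?thesis using L1 ev unfolding L_eq l_eq by linarith
  qed
  define M where "M = Max ((\<lambda>g. \<bar>lemp D (wgt \<zeta> (occ \<gamma> s0 T0 pol) muh) g T0\<bar>) ` G)"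
  have M_bd: "M \<le> S + Z + V * (\<epsilon>0 + 2 * \<Delta>)"
    unfolding M_def using G_fin Gb by (subst Max_le_iff) auto
  have lbT0: "lb \<gamma> r s0 \<zeta> muh D G T0 pol = eta \<gamma> r s0 T0 pol - 1 / (1 - \<gamma>) * (M + V * I)"
    unfolding lb_def M_def V_def I_def ..
  have "eta \<gamma> r s0 Tstar pol
       - 6 * V * eps_rho \<gamma> s0 TT Tstar pol / (1 - \<gamma>)^2
       - 1 / (1 - \<gamma>) * (V * eps_mu \<gamma> s0 \<zeta> muh Tstar pol + S + Z)
     \<le> eta \<gamma> r s0 T0 pol - 1 / (1 - \<gamma>) * (M + V * I)"
    by (rule final_arith[OF c0 _ V0 D0 Dc e00 e0le M_bd I_bd eta_bd]) (use gamma in simp)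
  also have "\<dots> = lb \<gamma> r s0 \<zeta> muh D G T0 pol" using lbT0 by simp
  also have "\<dots> \<le> (MAX T\<in>TT. lb \<gamma> r s0 \<zeta> muh D G T pol)"
    by (rule Max_ge) (use TT_fin T0(1) in auto)
  finally show ?thesis unfolding S_def Z_def V_def by simp
qed


end
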